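(* Let $(P,Q)$ be a global solution of the Cucker–Smale model with velocity control described in the context. Then the following are equivalent: (1) $(P,Q)$ exhibits bi-cluster flocking; (2) there exists a partition $\{A,B\}$ of $[N]$ such that \[ \sup_{t\ge0}\max\{D_{Q,A}(t),D_{Q,B}(t)\}<\infty\quad\text{and}\quad\sup_{t\ge0}\min_{i\in A,\,j\in B}|q_i(t)-q_j(t)|=\infty. \]
   Context: Let $N\ge2$, $d\ge1$, $\kappa>0$, $[N]=\{1,\dots,N\}$. The velocity control function $G:\mathbb R^d\to\mathbb R^d$ is $G(p)=g(|p|)\,p/|p|$ for $p\ne0$, $G(0)=0$, with $g\in C^1([0,\infty))$, $g(0)=0$, $0<m\le g'\le M$ on every compact interval (constants depending on the interval), and $g$ convex or concave on $(0,\infty)$. The kernel $\psi:(0,\infty)\to(0,\infty)$ is bounded, Lipschitz continuous and nonincreasing. The model is, for $i\in[N]$, $t>0$: \[ \dot q_i=G(p_i),\qquad \dot p_i=\frac{\kappa}{N}\sum_{k=1}^N\psi(|q_k-q_i|)\big(G(p_k)-G(p_i)\big),\qquad (q_i,p_i)(0)=(q_i^0,p_i^0)\in\mathbb R^d\times\mathbb R^d. \] For $S\subset[N]$: $D_{Q,S}(t)=\max_{i,j\in S}|q_i(t)-q_j(t)|$, $D_{P,S}(t)=\max_{i,j\in S}|p_i(t)-p_j(t)|$. The solution exhibits bi-cluster flocking if there is a nonempty proper subset $S\subset[N]$ with $\sup_{t\ge0}\max\{D_{Q,S}(t),D_{Q,[N]\setminus S}(t)\}<\infty$, $\sup_{t\ge0}\min_{i\in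 S,\,j\notin S}|q_i(t)-q_j(t)|=\infty$, and $\lim_{t\to\infty}D_{P,S}(t)=\lim_{t\to\infty}D_{P,[N]\setminus S}(t)=0$. *)

theory Defs
  imports "HOL-Analysis.Analysis"
begin

definition Gctl :: "(real \<Rightarrow> real) \<Rightarrow> real^'d \<Rightarrow> real^'d" where
  "Gctl g p = (if p = 0 then 0 else (g (norm p) / norm p) *\<^sub>R p)"

definition admissible_g :: "(real \<Rightarrow> real) \<Rightarrow> bool" where
  "admissible_g g \<longleftrightarrow>
     (\<exists>g'. (\<forall>x\<ge>0. (g has_real_derivative g' x) (at x within {0..}))
         \<and> continuous_on {0..} g'
         \<and> (\<forall>R\<ge>0. \<exists>m M. 0 < m \<and> (\<forall>x\<in>{0..R}. m \<le> g' x \<and> g' x \<le> M)))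
     \<and> g 0 = 0
     \<and> (convex_on {0<..} g \<or> concave_on {0<..} g)"

text \<open>Admissible kernel psi: positive, bounded, Lipschitz, nonincreasing
  (on [0,oo), psi(0) being the continuous extension).\<close>
definition admissible_psi :: "(real \<Rightarrow> real) \<Rightarrow> bool" where
  "admissible_psi \<psi> \<longleftrightarrow>
     (\<forall>r\<ge>0. \<psi> r > 0)
     \<and> (\<exists>B. \<forall>r\<ge>0. \<psi> r \<le> B)
     \<and> (\<exists>L. L-lipschitz_on {0..} \<psi>)
     \<and> (\<forall>x y. 0 \<le> x \<longrightarrow> x \<le> y \<longrightarrow> \<psi> y \<le> \<psi> x)"

definition CS_global_solution ::
  "nat \<Rightarrow> real \<Rightarrow> (real \<Rightarrow> real) \<Rightarrow> (real \<Rightarrow> real)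
   \<Rightarrow> (nat \<Rightarrow> real \<Rightarrow> real^'d) \<Rightarrow> (nat \<Rightarrow> real \<Rightarrow> real^'d) \<Rightarrow> bool" where
  "CS_global_solution N \<kappa> g \<psi> q p \<longleftrightarrow>
     (\<forall>i\<in>{1..N}. continuous_on {0..} (q i) \<and> continuous_on {0..} (p i))
     \<and> (\<forall>i\<in>{1..N}. \<forall>t>0.
          (q i has_vector_derivative Gctl g (p i t)) (at t)
        \<and> (p i has_vector_derivative
             (\<kappa> / real N) *\<^sub>R (\<Sum>k\<in>{1..N}. \<psi> (norm (q k t - q i t)) *\<^sub>R
                                  (Gctl g (p k t) - Gctl g (p i t)))) (at t))"

definition diam_at :: "(nat \<Rightarrow> real \<Rightarrow> real^'d) \<Rightarrow> nat set \<Rightarrow> real \<Rightarrow> real" where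
  "diam_at x S t = Max {norm (x i t - x j t) | i j. i \<in> S \<and> j \<in> S}"

definition inter_dist :: "(nat \<Rightarrow> real \<Rightarrow> real^'d) \<Rightarrow> nat set \<Rightarrow> nat set \<Rightarrow> real \<Rightarrow> real" where
  "inter_dist q A B t = Min {norm (q i t - q j t) | i j. i \<in> A \<and> j \<in> B}"

definition bounded_clusters_separating ::
  "(nat \<Rightarrow> real \<Rightarrow> real^'d) \<Rightarrow> nat set \<Rightarrow> nat set \<Rightarrow> bool" where
  "bounded_clusters_separating q A B \<longleftrightarrow>
     (\<exists>C. \<forall>t\<ge>0. max (diam_at q A t) (diam_at q B t) \<le> C)
     \<and> (\<forall>C. \<exists>t\<ge>0. inter_dist q A B t > C)"

definition bi_cluster_flocking ::
  "nat \<Rightarrow> (nat \<Rightarrow> real \<Rightarrow> real^'d) \<Rightarrow> (nat \<Rightarrow> real \<Rightarrow> real^'d) \<Rightarrow> bool" where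
  "bi_cluster_flocking N q p \<longleftrightarrow>
     (\<exists>S. S \<noteq> {} \<and> S \<subset> {1..N}
        \<and> bounded_clusters_separating q S ({1..N} - S)
        \<and> ((\<lambda>t. diam_at p S t) \<longlongrightarrow> 0) at_top
        \<and> ((\<lambda>t. diam_at p ({1..N} - S) t) \<longlongrightarrow> 0) at_top)"

end

theory Submission
  imports Defs
begin


lemma g_lin:
  assumes "admissible_g g" "R \<ge> 0"
  shows "\<exists>m>0. \<forall>x y. 0 \<le> y \<longrightarrow> y \<le> x \<longrightarrow> x \<le> R \<longrightarrow> m * (x - y) \<le> g x - g y"
proof -
  obtain g' where d: "\<forall>x\<ge>0. (g has_real_derivative g' x) (at x within {0..})"
    and b: "\<forall>R\<ge>0. \<exists>m M. 0 < m \<and> (\<forall>x\<in>{0..R}. m \<le> g' x \<and> g' x \<le> M)"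
    using assms(1) unfolding admissible_g_def by blast
  obtain m M where m: "0 < m" "\<forall>x\<in>{0..R}. m \<le> g' x \<and> g' x \<le> M" using b assms(2) by blast
  have cont: "continuous_on {0..} g"
    using d by (meson DERIV_continuous atLeast_iff continuous_on_eq_continuous_within)
  have dat: "(g has_real_derivative g' x) (at x)" if "x > 0" for x
  proof -
    have "at x within {0..} = at x"
      by (rule at_within_interior) (use that in simp)
    then show ?thesis using d that by (metis less_imp_le)
  qed
  have "m * (x - y) \<le> g x - g y" if "0 \<le> y" "y \<le> x" "x \<le> R" for x y
  proof (cases "y = x")
    case False
    then have yx: "y < x" using that by simp
    have "continuous_on {y..x} g" using cont by (rule continuous_on_subset) (use that in auto)
    moreover have "\<And>z. y < z \<Longrightarrow> z < x \<Longrightarrow> g differentiable (at z)"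
      using dat that by (meson le_less_trans real_differentiable_def)
    ultimately obtain l z where z: "y < z" "z < x" "DERIV g z :> l" "g x - g y = (x - y) * l"
      using MVT[OF yx] by blast
    have "l = g' z" using DERIV_unique[OF z(3) dat] z that by simp
    then have "l \<ge> m" using m z that by auto
    then show ?thesis using z(4) yx by (simp add: mult.commute mult_right_mono)
  qed simp
  then show ?thesis using m(1) by blast
qed



lemma G_norm:
  assumes "g (norm p) \<ge> 0" "g 0 = 0"
  shows "norm (Gctl g p) = g (norm p)"
  using assms by (auto simp: Gctl_def)

lemma G_mono:
  fixes p q :: "real^'d"
  assumes m: "\<And>x y. 0 \<le> y \<Longrightarrow> y \<le> x \<Longrightarrow> x \<le> R \<Longrightarrow> m * (x - y) \<le> g x - g y"
    and g0: "g 0 = 0" and m0: "m > 0"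
    and pR: "norm p \<le> R" and qR: "norm q \<le> R"
  shows "m * (norm (p - q))\<^sup>2 \<le> inner (p - q) (Gctl g p - Gctl g q)"
proof -
  have glow: "m * r \<le> g r" if "0 \<le> r" "r \<le> R" for r using m[of 0 r] that g0 by simp
  consider "p = 0" "q = 0" | "p = 0" "q \<noteq> 0" | "p \<noteq> 0" "q = 0" | "p \<noteq> 0" "q \<noteq> 0" by blast
  then show ?thesis
  proof cases
    case 1 then show ?thesis by simp
  next
    case 2
    have "inner (p - q) (Gctl g p - Gctl g q) = g (norm q) * norm q"
      using 2 by (simp add: Gctl_def inner_commute power2_norm_eq_inner[symmetric] power2_eq_square)
    moreover have "m * norm q \<le> g (norm q)" using glow qR by simp
    ultimately show ?thesis using 2 by (simp add: power2_eq_square mult_right_mono)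
  next
    case 3
    have "inner (p - q) (Gctl g p - Gctl g q) = g (norm p) * norm p"
      using 3 by (simp add: Gctl_def inner_commute power2_norm_eq_inner[symmetric] power2_eq_square)
    moreover have "m * norm p \<le> g (norm p)" using glow pR by simp
    ultimately show ?thesis using 3 by (simp add: power2_eq_square mult_right_mono)
  next
    case 4
    define a where "a = g (norm p) / norm p"
    define b where "b = g (norm q) / norm q"
    define c where "c = inner p q"
    define x where "x = norm p"
    define y where "y = norm q"
    have x0: "x > 0" and y0: "y > 0" using 4 by (auto simp: x_def y_def)
    have ax: "a * x = g x" and bx: "b * y = g y" using x0 y0 by (auto simp: a_def b_def x_def y_def)
    have am: "a \<ge> m" using glow[of x] x0 pR ax by (simp add: x_def a_def pos_le_divide_eq)
    have bm: "b \<ge> m" using glow[of y] y0 qR by (simp add: y_def b_def pos_le_divide_eq)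
    have cs: "c \<le> x * y" by (simp add: c_def x_def y_def norm_cauchy_schwarz)
    have lhs: "inner (p - q) (Gctl g p - Gctl g q) = a * x\<^sup>2 + b * y\<^sup>2 - (a + b) * c"
      using 4 by (simp add: Gctl_def a_def b_def c_def x_def y_def inner_diff_left inner_diff_right
          power2_norm_eq_inner inner_commute algebra_simps)
    have rhs: "(norm (p - q))\<^sup>2 = x\<^sup>2 + y\<^sup>2 - 2 * c"
      by (simp add: c_def x_def y_def power2_norm_eq_inner inner_diff_left inner_diff_right inner_commute)
    have key: "0 \<le> (x - y) * ((g x - g y) - m * (x - y))"
    proof (cases "y \<le> x")
      case True
      then show ?thesis using m[of y x] y0 pR x_def by simp
    next
      case False
      have "x - y \<le> 0" using False by simp
      moreover have "(g x - g y) - m * (x - y) \<le> 0" using m[of x y] x0 qR y_def False by (simp add: algebra_simps)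
      ultimately show ?thesis by (simp add: mult_nonpos_nonpos)
    qed
    have e1: "(x - y) * ((g x - g y) - m * (x - y)) = (a - m) * x\<^sup>2 + (b - m) * y\<^sup>2 - (a + b - 2*m) * (x*y)"
      by (simp add: ax[symmetric] bx[symmetric] power2_eq_square algebra_simps)
    have "(a + b - 2*m) * c \<le> (a + b - 2*m) * (x*y)"
      using am bm cs by (intro mult_left_mono) auto
    then show ?thesis unfolding lhs rhs using key e1 by (simp add: algebra_simps)
  qed
qed



lemma symm_sum:
  fixes w :: "nat \<Rightarrow> nat \<Rightarrow> real" and a b :: "nat \<Rightarrow> real^'d"
  assumes "\<And>i k. w i k = w k i"
  shows "2 * (\<Sum>i\<in>S. \<Sum>k\<in>S. w i k * inner (a i) (b k - b i))
       = - (\<Sum>i\<in>S. \<Sum>k\<in>S. w i k * inner (a k - a i) (b k - b i))"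
proof -
  have sw: "(\<Sum>i\<in>S. \<Sum>k\<in>S. w i k * inner (a i) (b k - b i))
        = (\<Sum>i\<in>S. \<Sum>k\<in>S. w i k * inner (a k) (b i - b k))"
    by (subst sum.swap) (simp add: assms)
  have "2 * (\<Sum>i\<in>S. \<Sum>k\<in>S. w i k * inner (a i) (b k - b i))
      = (\<Sum>i\<in>S. \<Sum>k\<in>S. w i k * inner (a i) (b k - b i)) + (\<Sum>i\<in>S. \<Sum>k\<in>S. w i k * inner (a k) (b i - b k))"
    using sw by simp
  also have "\<dots> = (\<Sum>i\<in>S. \<Sum>k\<in>S. w i k * inner (a i) (b k - b i) + w i k * inner (a k) (b i - b k))"
    by (simp add: sum.distrib)
  also have "\<dots> = (\<Sum>i\<in>S. \<Sum>k\<in>S. - (w i k * inner (a k - a i) (b k - b i)))"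
    by (intro sum.cong refl) (simp add: inner_diff_left inner_diff_right algebra_simps)
  finally show ?thesis by (simp add: sum_negf)
qed

lemma E_deriv:
  fixes p :: "nat \<Rightarrow> real \<Rightarrow> real^'d"
  assumes "\<And>i. i \<in> S \<Longrightarrow> (p i has_vector_derivative v i) (at t)"
  shows "((\<lambda>t. \<Sum>i\<in>S. inner (p i t) (p i t)) has_real_derivative (\<Sum>i\<in>S. 2 * inner (p i t) (v i))) (at t)"
proof (rule DERIV_sum)
  fix i assume "i \<in> S"
  then have d: "(p i has_derivative (\<lambda>h. h *\<^sub>R v i)) (at t)"
    using assms has_vector_derivative_def by blast
  have "((\<lambda>t. inner (p i t) (p i t)) has_derivative (\<lambda>h. inner (p i t) (h *\<^sub>R v i) + inner (h *\<^sub>R v i) (p i t))) (at t)"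
    by (rule has_derivative_inner[OF d d])
  then show "((\<lambda>t. inner (p i t) (p i t)) has_real_derivative 2 * inner (p i t) (v i)) (at t)"
    unfolding has_field_derivative_def
    by (rule has_derivative_eq_rhs) (auto simp: inner_commute algebra_simps)
qed



lemma diam_set_eq:
  "{norm (x i t - x j t) | i j. i \<in> S \<and> j \<in> S} = (\<lambda>(i,j). norm (x i t - x j t)) ` (S \<times> S)"
  by auto

lemma diam_ge:
  assumes "finite S" "i \<in> S" "j \<in> S"
  shows "norm (x i t - x j t) \<le> diam_at x S t"
  unfolding diam_at_def diam_set_eq using assms
  by (intro Max_ge) auto

lemma diam_nonneg:
  assumes "finite S" "S \<noteq> {}"
  shows "0 \<le> diam_at x S t"
  using assms diam_ge[OF assms(1)] by (meson all_not_in_conv norm_ge_zero order_trans)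

lemma diam_tendsto:
  assumes "finite S" "S \<noteq> {}"
    and "\<And>i k. i \<in> S \<Longrightarrow> k \<in> S \<Longrightarrow> ((\<lambda>t. norm (x i t - x k t)) \<longlongrightarrow> 0) at_top"
  shows "((\<lambda>t. diam_at x S t) \<longlongrightarrow> 0) at_top"
proof (rule tendsto_sandwich[where f="\<lambda>t. 0" and h="\<lambda>t. \<Sum>i\<in>S. \<Sum>k\<in>S. norm (x i t - x k t)"])
  show "\<forall>\<^sub>F t in at_top. 0 \<le> diam_at x S t" by (intro always_eventually allI diam_nonneg[OF assms(1,2)])
  show "\<forall>\<^sub>F t in at_top. diam_at x S t \<le> (\<Sum>i\<in>S. \<Sum>k\<in>S. norm (x i t - x k t))"
  proof (intro always_eventually allI)
    fix t
    have "norm (x i t - x j t) \<le> (\<Sum>i\<in>S. \<Sum>k\<in>S. norm (x i t - x k t))" if "i \<in> S" "j \<in> S" for i j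
    proof -
      have "norm (x i t - x j t) \<le> (\<Sum>k\<in>S. norm (x i t - x k t))"
        using that assms(1) by (intro member_le_sum) auto
      also have "\<dots> \<le> (\<Sum>i\<in>S. \<Sum>k\<in>S. norm (x i t - x k t))"
        using that assms(1) by (intro member_le_sum[where f="\<lambda>i. \<Sum>k\<in>S. norm (x i t - x k t)"]) (auto intro: sum_nonneg)
      finally show ?thesis .
    qed
    then show "diam_at x S t \<le> (\<Sum>i\<in>S. \<Sum>k\<in>S. norm (x i t - x k t))"
      unfolding diam_at_def diam_set_eq using assms(1,2) by (subst Max_le_iff) auto
  qed
  show "((\<lambda>t. \<Sum>i\<in>S. \<Sum>k\<in>S. norm (x i t - x k t)) \<longlongrightarrow> 0) at_top"
    using assms(3) by (intro tendsto_null_sum) auto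
qed simp

lemma dec_lemma:
  fixes f :: "real \<Rightarrow> real"
  assumes "a \<le> b" "continuous_on {a..b} f"
    and "\<And>x. a < x \<Longrightarrow> x < b \<Longrightarrow> (f has_real_derivative f' x) (at x)"
    and "\<And>x. a < x \<Longrightarrow> x < b \<Longrightarrow> f' x \<le> - c"
  shows "f b - f a \<le> - c * (b - a)"
proof (cases "a = b")
  case False
  then have ab: "a < b" using assms by simp
  obtain l z where z: "a < z" "z < b" "DERIV f z :> l" "f b - f a = (b - a) * l"
    using MVT[OF ab assms(2)] assms(3) real_differentiable_def by blast
  have "l = f' z" using DERIV_unique[OF z(3) assms(3)[OF z(1,2)]] .
  then have "l \<le> -c" using assms(4) z by simp
  then have "l * (b - a) \<le> (-c) * (b - a)" using ab by (intro mult_right_mono) auto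
  then show ?thesis using z(4) by (simp add: mult.commute)
qed simp

lemma lip_lemma:
  fixes f :: "real \<Rightarrow> real^'d"
  assumes "s \<le> t" "continuous_on {s..t} f"
    and "\<And>x. s < x \<Longrightarrow> x < t \<Longrightarrow> (f has_vector_derivative v x) (at x)"
    and "\<And>x. s < x \<Longrightarrow> x < t \<Longrightarrow> norm (v x) \<le> K"
  shows "norm (f t - f s) \<le> K * (t - s)"
proof (cases "s = t")
  case False
  then have st: "s < t" using assms by simp
  obtain x where x: "x \<in> {s<..<t}" "norm (f t - f s) \<le> norm ((t - s) *\<^sub>R v x)"
    using mvt_general[OF st assms(2), of "\<lambda>x h. h *\<^sub>R v x"] assms(3)
    unfolding has_vector_derivative_def by auto
  have "norm ((t - s) *\<^sub>R v x) = (t - s) * norm (v x)" using st by simp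
  also have "\<dots> \<le> (t - s) * K" using assms(4) x(1) st by (intro mult_left_mono) auto
  finally show ?thesis using x(2) by (simp add: mult.commute)
qed simp



lemma G_mono0:
  fixes p q :: "real^'d"
  assumes "admissible_g g"
  shows "0 \<le> inner (p - q) (Gctl g p - Gctl g q)"
proof -
  have "max (norm p) (norm q) \<ge> 0" by (simp add: le_max_iff_disj)
  then obtain m where m: "m > 0" "\<forall>x y. 0 \<le> y \<longrightarrow> y \<le> x \<longrightarrow> x \<le> max (norm p) (norm q) \<longrightarrow> m * (x - y) \<le> g x - g y"
    using g_lin[OF assms] by blast
  have g0: "g 0 = 0" using assms by (simp add: admissible_g_def)
  have "m * (norm (p - q))\<^sup>2 \<le> inner (p - q) (Gctl g p - Gctl g q)"
    by (rule G_mono[where R="max (norm p) (norm q)"]) (use m g0 in auto)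
  moreover have "0 \<le> m * (norm (p - q))\<^sup>2" using m by simp
  ultimately show ?thesis by linarith
qed

lemma alignment:
  fixes q p :: "nat \<Rightarrow> real \<Rightarrow> real^'d"
  assumes kap: "\<kappa> > 0" and N1: "N \<ge> 1"
    and ag: "admissible_g g" and ap: "admissible_psi \<psi>"
    and sol: "CS_global_solution N \<kappa> g \<psi> q p"
    and AN: "A \<subseteq> {1..N}" and Ane: "A \<noteq> {}"
    and Cb: "\<And>t. t \<ge> 0 \<Longrightarrow> diam_at q A t \<le> C"
  shows "((\<lambda>t. diam_at p A t) \<longlongrightarrow> 0) at_top"
proof -
  define G :: "real^'d \<Rightarrow> real^'d" where "G = Gctl g"
  define I where "I = {1..N}"
  have finI: "finite I" and cardI: "card I = N" by (auto simp: I_def)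
  define v where "v i t = (\<kappa> / real N) *\<^sub>R (\<Sum>k\<in>I. \<psi> (norm (q k t - q i t)) *\<^sub>R (G (p k t) - G (p i t)))" for i t
  have contp: "\<And>i. i \<in> I \<Longrightarrow> continuous_on {0..} (p i)"
    using sol by (simp add: CS_global_solution_def I_def)
  have derp: "\<And>i t. i \<in> I \<Longrightarrow> t > 0 \<Longrightarrow> (p i has_vector_derivative v i t) (at t)"
    using sol by (simp add: CS_global_solution_def I_def v_def G_def)
  have g0: "g 0 = 0" using ag by (simp add: admissible_g_def)
  have psipos: "\<And>r. r \<ge> 0 \<Longrightarrow> \<psi> r > 0" and psimono: "\<And>x y. 0 \<le> x \<Longrightarrow> x \<le> y \<Longrightarrow> \<psi> y \<le> \<psi> x"
    using ap by (auto simp: admissible_psi_def)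
  obtain Bp where Bp: "\<And>r. r \<ge> 0 \<Longrightarrow> \<psi> r \<le> Bp" using ap by (auto simp: admissible_psi_def)
  define w where "w t i k = \<psi> (norm (q k t - q i t))" for t i k
  have wsym: "w t i k = w t k i" for t i k by (simp add: w_def norm_minus_commute)
  define D where "D t = (\<Sum>i\<in>I. \<Sum>k\<in>I. w t i k * inner (p k t - p i t) (G (p k t) - G (p i t)))" for t
  define E where "E t = (\<Sum>i\<in>I. inner (p i t) (p i t))" for t
  have Enn: "E t \<ge> 0" for t by (simp add: E_def sum_nonneg)
  have tnn: "0 \<le> w x i k * inner (p k x - p i x) (G (p k x) - G (p i x))" for x i k
    unfolding w_def G_def by (rule mult_nonneg_nonneg[OF less_imp_le[OF psipos[OF norm_ge_zero]] G_mono0[OF ag]])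
  have Dnn: "D t \<ge> 0" for t
    unfolding D_def by (intro sum_nonneg tnn)
  have Eder: "(E has_real_derivative - (\<kappa> / real N) * D t) (at t)" if "t > 0" for t
  proof -
    have "(E has_real_derivative (\<Sum>i\<in>I. 2 * inner (p i t) (v i t))) (at t)"
      unfolding E_def by (rule E_deriv) (use derp that in auto)
    moreover have "(\<Sum>i\<in>I. 2 * inner (p i t) (v i t)) = - (\<kappa> / real N) * D t"
    proof -
      have "(\<Sum>i\<in>I. 2 * inner (p i t) (v i t))
          = (\<kappa> / real N) * (2 * (\<Sum>i\<in>I. \<Sum>k\<in>I. w t i k * inner (p i t) (G (p k t) - G (p i t))))"
      proof -
        have "2 * inner (p i t) (v i t) = (\<kappa> / real N) * 2 * (\<Sum>k\<in>I. w t i k * inner (p i t) (G (p k t) - G (p i t)))" for i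
          by (simp add: v_def w_def inner_sum_right)
        then have "(\<Sum>i\<in>I. 2 * inner (p i t) (v i t)) = (\<Sum>i\<in>I. ((\<kappa> / real N) * 2) * (\<Sum>k\<in>I. w t i k * inner (p i t) (G (p k t) - G (p i t))))"
          by (intro sum.cong) auto
        also have "\<dots> = ((\<kappa> / real N) * 2) * (\<Sum>i\<in>I. \<Sum>k\<in>I. w t i k * inner (p i t) (G (p k t) - G (p i t)))"
          by (rule sum_distrib_left[symmetric])
        finally show ?thesis by simp
      qed
      also have "\<dots> = - (\<kappa> / real N) * D t"
        unfolding D_def symm_sum[where w="w t" and S=I and a="\<lambda>i. p i t" and b="\<lambda>i. G (p i t)", OF wsym] by simp
      finally show ?thesis .
    qed
    ultimately show ?thesis by simp
  qed
  have contE: "continuous_on {0..} E"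
    unfolding E_def using contp by (intro continuous_intros) auto
  have Edec: "E t \<le> E s" if "0 \<le> s" "s \<le> t" for s t
  proof -
    have "E t - E s \<le> - 0 * (t - s)"
    proof (rule dec_lemma[OF that(2)])
      show "continuous_on {s..t} E" using contE by (rule continuous_on_subset) (use that in auto)
      show "(E has_real_derivative - (\<kappa> / real N) * D x) (at x)" if "s < x" "x < t" for x
        using Eder that \<open>0 \<le> s\<close> by simp
      show "- (\<kappa> / real N) * D x \<le> - 0" for x using Dnn kap by simp
    qed
    then show ?thesis by simp
  qed
  define R where "R = sqrt (E 0)"
  have pR: "norm (p i t) \<le> R" if "i \<in> I" "t \<ge> 0" for i t
  proof -
    have "(norm (p i t))\<^sup>2 \<le> E t"
      unfolding E_def power2_norm_eq_inner using that finI by (intro member_le_sum) auto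
    also have "\<dots> \<le> E 0" using Edec that by simp
    finally show ?thesis unfolding R_def by (simp add: real_le_rsqrt)
  qed
  have R0: "R \<ge> 0" by (simp add: R_def Enn)
  obtain m where m: "m > 0" "\<forall>x y. 0 \<le> y \<longrightarrow> y \<le> x \<longrightarrow> x \<le> R \<longrightarrow> m * (x - y) \<le> g x - g y"
    using g_lin[OF ag R0] by auto
  have Gb: "norm (G (p i t)) \<le> g R" if "i \<in> I" "t \<ge> 0" for i t
  proof -
    have "m * (norm (p i t) - 0) \<le> g (norm (p i t)) - g 0" using m(2)[rule_format, of 0 "norm (p i t)"] pR[OF that] by simp
    moreover have "0 \<le> m * norm (p i t)" using m(1) by simp
    ultimately have "g (norm (p i t)) \<ge> 0" using g0 by simp
    then have "norm (G (p i t)) = g (norm (p i t))" unfolding G_def using G_norm g0 by blast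
    also have "\<dots> \<le> g R"
    proof -
      have "m * (R - norm (p i t)) \<le> g R - g (norm (p i t))" using m(2)[rule_format, of "norm (p i t)" R] pR[OF that] by simp
      moreover have "0 \<le> m * (R - norm (p i t))" using m(1) pR[OF that] by simp
      ultimately show ?thesis by linarith
    qed
    finally show ?thesis .
  qed
  define K where "K = \<kappa> * Bp * (2 * g R) + 1"
  have Bp0: "Bp \<ge> 0" using Bp[of 0] psipos[of 0] by simp
  have gR0: "g R \<ge> 0"
  proof -
    have "1 \<in> I" using N1 by (simp add: I_def)
    from Gb[OF this order_refl] show ?thesis using norm_ge_zero[of "G (p 1 0)"] by linarith
  qed
  have K0: "K > 0" unfolding K_def using kap Bp0 gR0 by (simp add: add_nonneg_pos)
  have vb: "norm (v i t) \<le> K" if "i \<in> I" "t \<ge> 0" for i t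
  proof -
    have "norm (v i t) = (\<kappa> / real N) * norm (\<Sum>k\<in>I. \<psi> (norm (q k t - q i t)) *\<^sub>R (G (p k t) - G (p i t)))"
      using kap by (simp add: v_def)
    also have "\<dots> \<le> (\<kappa> / real N) * (\<Sum>k\<in>I. Bp * (2 * g R))"
    proof -
      have "norm (\<Sum>k\<in>I. \<psi> (norm (q k t - q i t)) *\<^sub>R (G (p k t) - G (p i t))) \<le> (\<Sum>k\<in>I. norm (\<psi> (norm (q k t - q i t)) *\<^sub>R (G (p k t) - G (p i t))))"
        by (rule norm_sum)
      also have "\<dots> \<le> (\<Sum>k\<in>I. Bp * (2 * g R))"
      proof (rule sum_mono)
      fix k assume k: "k \<in> I"
      have "norm (G (p k t) - G (p i t)) \<le> 2 * g R"
        using Gb[OF k that(2)] Gb[OF that] norm_triangle_ineq4[of "G (p k t)" "G (p i t)"] by linarith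
      then show "norm (\<psi> (norm (q k t - q i t)) *\<^sub>R (G (p k t) - G (p i t))) \<le> Bp * (2 * g R)"
        using Bp[of "norm (q k t - q i t)"] psipos[of "norm (q k t - q i t)"]
        by (simp add: mult_mono' gR0)
      qed
      finally show ?thesis using kap by (intro mult_left_mono) auto
    qed
    also have "\<dots> = \<kappa> * Bp * (2 * g R)" using cardI N1 by simp
    finally show ?thesis unfolding K_def by simp
  qed
  have lip: "norm (p i t - p i s) \<le> K * (t - s)" if "i \<in> I" "0 \<le> s" "s \<le> t" for i s t
  proof (rule lip_lemma[OF that(3)])
    show "continuous_on {s..t} (p i)" using contp[OF that(1)] by (rule continuous_on_subset) (use that in auto)
    show "(p i has_vector_derivative v i x) (at x)" if "s < x" "x < t" for x
      using derp \<open>i \<in> I\<close> that \<open>0 \<le> s\<close> by simp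
    show "norm (v i x) \<le> K" if "s < x" "x < t" for x
      using vb \<open>i \<in> I\<close> that \<open>0 \<le> s\<close> by simp
  qed
  have Gm: "m * (norm (p k x - p i x))\<^sup>2 \<le> inner (p k x - p i x) (G (p k x) - G (p i x))"
    if "k \<in> I" "i \<in> I" "x \<ge> 0" for k i x
  proof -
    have mm: "\<And>x y. 0 \<le> y \<Longrightarrow> y \<le> x \<Longrightarrow> x \<le> R \<Longrightarrow> m * (x - y) \<le> g x - g y" using m(2) by blast
    show ?thesis unfolding G_def by (rule G_mono[OF mm g0 m(1) pR[OF that(1,3)] pR[OF that(2,3)]])
  qed
  define C' where "C' = max C 0"
  have finA: "finite A" using AN finite_subset by (auto simp: I_def)
  have wlow: "w t i k \<ge> \<psi> C'" if "i \<in> A" "k \<in> A" "t \<ge> 0" for i k t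
  proof -
    have "norm (q k t - q i t) \<le> C'"
      using diam_ge[OF finA that(2,1), of q t] Cb[OF that(3)] by (simp add: C'_def)
    then show ?thesis unfolding w_def by (intro psimono) auto
  qed
  have psiC: "\<psi> C' > 0" by (intro psipos) (simp add: C'_def)
  have pair: "((\<lambda>t. norm (p k t - p i t)) \<longlongrightarrow> 0) at_top" if iA: "i \<in> A" and kA: "k \<in> A" for i k
  proof (rule tendstoI)
    fix \<epsilon> :: real assume \<epsilon>: "\<epsilon> > 0"
    show "\<forall>\<^sub>F t in at_top. dist (norm (p k t - p i t)) 0 < \<epsilon>"
    proof (rule ccontr)
      assume "\<not> ?thesis"
      then have big: "\<forall>T. \<exists>t\<ge>T. norm (p k t - p i t) \<ge> \<epsilon>"
        by (simp add: eventually_at_top_linorder not_less)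
      have iI: "i \<in> I" and kI: "k \<in> I" using iA kA AN by (auto simp: I_def)
      define \<delta> where "\<delta> = \<epsilon> / (4 * K)"
      have \<delta>0: "\<delta> > 0" using \<epsilon> K0 by (simp add: \<delta>_def)
      define c where "c = (\<kappa> / real N) * (\<psi> C' * (m * (\<epsilon> / 2)\<^sup>2))"
      have c0: "c > 0" using kap N1 psiC m \<epsilon> by (simp add: c_def)
      define L where "L = Inf (E ` {0..})"
      have bdd: "bdd_below (E ` {0..})" unfolding bdd_below_def using Enn by auto
      have "L < L + c * \<delta>" using c0 \<delta>0 by simp
      have ne: "E ` {0..} \<noteq> {}" by blast
      have "\<exists>y\<in>E ` {0..}. y < L + c * \<delta>"
        using cInf_less_iff[OF ne bdd, of "L + c * \<delta>"] \<open>L < L + c * \<delta>\<close> unfolding L_def[symmetric] by blast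
      then obtain t0 where t0: "t0 \<ge> 0" "E t0 < L + c * \<delta>" by auto
      obtain t where t: "t \<ge> t0" "norm (p k t - p i t) \<ge> \<epsilon>" using big by blast
      have t0': "t \<ge> 0" using t t0 by simp
      have sep: "norm (p k s - p i s) \<ge> \<epsilon> / 2" if "t \<le> s" "s \<le> t + \<delta>" for s
      proof -
        have a: "norm (p k s - p k t) \<le> K * \<delta>"
        proof -
          have "K * (s - t) \<le> K * \<delta>" using that K0 by (intro mult_left_mono) auto
          then show ?thesis using lip[OF kI t0' that(1)] by linarith
        qed
        have b: "norm (p i s - p i t) \<le> K * \<delta>"
        proof -
          have "K * (s - t) \<le> K * \<delta>" using that K0 by (intro mult_left_mono) auto
          then show ?thesis using lip[OF iI t0' that(1)] by linarith
        qed
        have "K * \<delta> = \<epsilon> / 4" using K0 by (simp add: \<delta>_def)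
        moreover have "norm (p k t - p i t) \<le> norm (p k s - p i s) + norm (p k s - p k t) + norm (p i s - p i t)"
        proof -
          have eq: "p k t - p i t = (p k s - p i s) - ((p k s - p k t) - (p i s - p i t))" by (simp add: algebra_simps)
          have "norm ((p k s - p i s) - ((p k s - p k t) - (p i s - p i t))) \<le> norm (p k s - p i s) + norm ((p k s - p k t) - (p i s - p i t))"
            by (rule norm_triangle_ineq4)
          moreover have "norm ((p k s - p k t) - (p i s - p i t)) \<le> norm (p k s - p k t) + norm (p i s - p i t)"
            by (rule norm_triangle_ineq4)
          ultimately show ?thesis unfolding eq by linarith
        qed
        ultimately show ?thesis using a b t by linarith
      qed
      have "E (t + \<delta>) - E t \<le> - c * (t + \<delta> - t)"
      proof (rule dec_lemma)
        show "t \<le> t + \<delta>" using \<delta>0 by simp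
        show "continuous_on {t..t + \<delta>} E" using contE by (rule continuous_on_subset) (use t0' in auto)
        show "(E has_real_derivative - (\<kappa> / real N) * D x) (at x)" if "t < x" "x < t + \<delta>" for x
          using Eder that t0' by simp
        show "- (\<kappa> / real N) * D x \<le> - c" if "t < x" "x < t + \<delta>" for x
        proof -
          have x0: "x \<ge> 0" using that t0' by simp
          have tnn1: "\<And>k'. k' \<in> I - {k} \<Longrightarrow> 0 \<le> w x i k' * inner (p k' x - p i x) (G (p k' x) - G (p i x))"
            by (rule tnn)
          have tnn2: "\<And>i'. i' \<in> I - {i} \<Longrightarrow> 0 \<le> (\<Sum>k'\<in>I. w x i' k' * inner (p k' x - p i' x) (G (p k' x) - G (p i' x)))"
            by (rule sum_nonneg, rule tnn)
          have "\<psi> C' * (m * (\<epsilon> / 2)\<^sup>2) \<le> w x i k * inner (p k x - p i x) (G (p k x) - G (p i x))"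
          proof (rule mult_mono)
            show "\<psi> C' \<le> w x i k" using wlow[OF iA kA x0] .
            have "m * (\<epsilon> / 2)\<^sup>2 \<le> m * (norm (p k x - p i x))\<^sup>2"
            proof -
              have "\<epsilon> / 2 \<le> norm (p k x - p i x)" using sep[of x] that by simp
              then have "(\<epsilon> / 2)\<^sup>2 \<le> (norm (p k x - p i x))\<^sup>2" using \<epsilon> by (intro power_mono) auto
              then show ?thesis using m(1) by (intro mult_left_mono) auto
            qed
            also have "\<dots> \<le> inner (p k x - p i x) (G (p k x) - G (p i x))"
              using Gm[OF kI iI x0] .
            finally show "m * (\<epsilon> / 2)\<^sup>2 \<le> inner (p k x - p i x) (G (p k x) - G (p i x))" .
            show "0 \<le> w x i k" using wlow[OF iA kA x0] psiC by simp
            show "0 \<le> m * (\<epsilon> / 2)\<^sup>2" using m by simp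
          qed
          also have "\<dots> \<le> (\<Sum>k'\<in>I. w x i k' * inner (p k' x - p i x) (G (p k' x) - G (p i x)))"
            by (rule member_le_sum[OF kI tnn1 finI])
          also have "\<dots> \<le> D x"
            unfolding D_def by (rule member_le_sum[OF iI tnn2 finI])
          finally have "\<psi> C' * (m * (\<epsilon> / 2)\<^sup>2) \<le> D x" .
          then have "(\<kappa> / real N) * (\<psi> C' * (m * (\<epsilon> / 2)\<^sup>2)) \<le> (\<kappa> / real N) * D x"
            using kap by (intro mult_left_mono) auto
          then show ?thesis unfolding c_def by simp
        qed
      qed
      then have "E (t + \<delta>) \<le> E t - c * \<delta>" by simp
      also have "\<dots> \<le> E t0 - c * \<delta>" using Edec[OF t0(1) t(1)] by simp
      also have "\<dots> < L" using t0 by simp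
      also have "L \<le> E (t + \<delta>)" unfolding L_def using bdd t0' \<delta>0 by (intro cInf_lower) auto
      finally show False by simp
    qed
  qed
  show ?thesis
    by (intro diam_tendsto[OF finA Ane] pair)
qed


theorem proposition2p2:
  fixes N :: nat and \<kappa> :: real and g \<psi> :: "real \<Rightarrow> real"
    and q p :: "nat \<Rightarrow> real \<Rightarrow> real^'d"
  assumes "N \<ge> 2" and "\<kappa> > 0"
    and "admissible_g g" and "admissible_psi \<psi>"
    and "CS_global_solution N \<kappa> g \<psi> q p"
  shows "bi_cluster_flocking N q p \<longleftrightarrow>
         (\<exists>A B. A \<union> B = {1..N} \<and> A \<inter> B = {} \<and> A \<noteq> {} \<and> B \<noteq> {}
                \<and> bounded_clusters_separating q A B)"
proof
  assume "bi_cluster_flocking N q p"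
  then obtain S where S: "S \<noteq> {}" "S \<subset> {1..N}" "bounded_clusters_separating q S ({1..N} - S)"
    unfolding bi_cluster_flocking_def by blast
  show "\<exists>A B. A \<union> B = {1..N} \<and> A \<inter> B = {} \<and> A \<noteq> {} \<and> B \<noteq> {}
                \<and> bounded_clusters_separating q A B"
  proof (intro exI conjI)
    show "S \<union> ({1..N} - S) = {1..N}" using S(2) by blast
    show "S \<inter> ({1..N} - S) = {}" by blast
    show "S \<noteq> {}" by (rule S(1))
    show "{1..N} - S \<noteq> {}" using S(2) by blast
    show "bounded_clusters_separating q S ({1..N} - S)" by (rule S(3))
  qed
next
  assume "\<exists>A B. A \<union> B = {1..N} \<and> A \<inter> B = {} \<and> A \<noteq> {} \<and> B \<noteq> {}
                \<and> bounded_clusters_separating q A B"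
  then obtain A B where AB: "A \<union> B = {1..N}" "A \<inter> B = {}" "A \<noteq> {}" "B \<noteq> {}"
    "bounded_clusters_separating q A B" by blast
  have Bc: "{1..N} - A = B" using AB(1,2) by blast
  have sub: "A \<subset> {1..N}" using AB(1,2,4) by blast
  obtain C where C: "\<And>t. t \<ge> 0 \<Longrightarrow> max (diam_at q A t) (diam_at q B t) \<le> C"
    using AB(5) unfolding bounded_clusters_separating_def by blast
  have N1: "N \<ge> 1" using assms(1) by simp
  have CA: "diam_at q A t \<le> C" if "t \<ge> 0" for t using C[OF that] by (simp add: max.bounded_iff)
  have CB: "diam_at q B t \<le> C" if "t \<ge> 0" for t using C[OF that] by (simp add: max.bounded_iff)
  have subA: "A \<subseteq> {1..N}" and subB: "B \<subseteq> {1..N}" using AB(1) by blast+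
  have tA: "((\<lambda>t. diam_at p A t) \<longlongrightarrow> 0) at_top"
    by (rule alignment[OF assms(2) N1 assms(3,4,5) subA AB(3) CA])
  have tB: "((\<lambda>t. diam_at p B t) \<longlongrightarrow> 0) at_top"
    by (rule alignment[OF assms(2) N1 assms(3,4,5) subB AB(4) CB])
  show "bi_cluster_flocking N q p"
    unfolding bi_cluster_flocking_def
  proof (intro exI[of _ A] conjI)
    show "A \<noteq> {}" by (rule AB(3))
    show "A \<subset> {1..N}" by (rule sub)
    show "bounded_clusters_separating q A ({1..N} - A)" unfolding Bc by (rule AB(5))
    show "((\<lambda>t. diam_at p A t) \<longlongrightarrow> 0) at_top" by (rule tA)
    show "((\<lambda>t. diam_at p ({1..N} - A) t) \<longlongrightarrow> 0) at_top" unfolding Bc by (rule tB)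
  qed
qed

end
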